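(* For every $1$-Sperner hypergraph ${\cal H}=(V,{\cal E})$ with ${\cal E}\neq\{\emptyset\}$, the characteristic vectors $\chi^e\in\mathbb{R}^V$ ($e\in{\cal E}$) of its hyperedges are linearly independent.
   Context: A hypergraph ${\cal H}=(V,{\cal E})$ consists of a finite vertex set $V$ and a set ${\cal E}$ of subsets of $V$. It is $1$-Sperner if every two distinct hyperedges $e,f$ satisfy $\min\{|e\setminus f|,|f\setminus e|\}=1$. The characteristic vector $\chi^e\in\{0,1\}^V$ of $e$ has $\chi^e_v=1$ iff $v\in e$. *)

theory Defs
  imports Main "HOL-Library.Indicator_Function"
begin

definition hypergraph :: "'a set \<Rightarrow> 'a set set \<Rightarrow> bool" where
  "hypergraph V E \<longleftrightarrow> finite V \<and> (\<forall>e\<in>E. e \<subseteq> V)"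

definition one_sperner :: "'a set set \<Rightarrow> bool" where
  "one_sperner E \<longleftrightarrow>
     (\<forall>e\<in>E. \<forall>f\<in>E. e \<noteq> f \<longrightarrow> min (card (e - f)) (card (f - e)) = 1)"

definition char_vec :: "'a set \<Rightarrow> 'a \<Rightarrow> real" where
  "char_vec e v = (if v \<in> e then 1 else 0)"

definition lin_indep_family :: "'a set \<Rightarrow> 'i set \<Rightarrow> ('i \<Rightarrow> 'a \<Rightarrow> real) \<Rightarrow> bool" where
  "lin_indep_family V I x \<longleftrightarrow>
     (\<forall>c :: 'i \<Rightarrow> real. (\<forall>v\<in>V. (\<Sum>i\<in>I. c i * x i v) = 0) \<longrightarrow> (\<forall>i\<in>I. c i = 0))"

end

theory Submission
  imports Defs
begin

lemma card1_same: "card X = 1 \<Longrightarrow> a \<in> X \<Longrightarrow> b \<in> X \<Longrightarrow> a = b"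
  by (metis card_1_singletonE singletonD)

lemma obtain_min:
  fixes g :: "'i \<Rightarrow> nat"
  assumes "J \<noteq> {}"
  obtains j where "j \<in> J" "\<forall>i\<in>J. g j \<le> g i"
proof -
  from assms obtain k where "k \<in> J" by blast
  from arg_min_nat_lemma[of "\<lambda>i. i \<in> J" k g, OF this] that show ?thesis by blast
qed

lemma sum_cv: "finite e \<Longrightarrow> (\<Sum>u\<in>e. char_vec A u) = real (card (e \<inter> A))"
proof -
  assume f: "finite e"
  have "(\<Sum>u\<in>e. char_vec A u) = (\<Sum>u\<in>e. if u \<in> A then 1 else 0)"
    by (simp add: char_vec_def)
  also have "\<dots> = (\<Sum>u\<in>{u\<in>e. u \<in> A}. 1)" using sum.inter_filter[OF f, of "\<lambda>_. (1::real)"] by simp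
  also have "\<dots> = real (card {u\<in>e. u \<in> A})" by simp
  also have "{u\<in>e. u \<in> A} = e \<inter> A" by blast
  finally show ?thesis .
qed

lemma key:
  fixes I :: "'i set" and A :: "'i \<Rightarrow> 'a set" and c :: "'i \<Rightarrow> real"
  assumes "finite I"
    and "\<forall>i\<in>I. finite (A i) \<and> A i \<noteq> {} \<and> A i \<subseteq> V"
    and "\<forall>i\<in>I. \<forall>j\<in>I. i \<noteq> j \<longrightarrow> min (card (A i - A j)) (card (A j - A i)) = 1"
    and "m \<ge> 0"
    and "\<forall>x\<in>V. (\<Sum>i\<in>I. c i * char_vec (A i) x) = - m * (\<Sum>i\<in>I. c i)"
  shows "\<forall>i\<in>I. c i = 0"
  using assms
proof (induction "card I" arbitrary: I A V c m rule: less_induct)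
  case less
  note fin = less.prems(1) and wf = less.prems(2) and sp = less.prems(3)
    and mpos = less.prems(4) and eq = less.prems(5)
  show ?case
  proof (cases "I = {}")
    case True thus ?thesis by simp
  next
    case False
    obtain i0 where i0: "i0 \<in> I" "\<forall>j\<in>I. card (A i0) \<le> card (A j)"
      using obtain_min[OF False, of "\<lambda>i. card (A i)"] by blast
    define e0 where "e0 = A i0"
    define k where "k = card e0"
    have fe0: "finite e0" and ne0: "e0 \<noteq> {}" and e0V: "e0 \<subseteq> V"
      using wf i0 by (auto simp: e0_def)
    have k1: "k \<ge> 1" using fe0 ne0 by (simp add: k_def Suc_le_eq card_gt_0_iff)
    have one: "card (e0 - A j) = 1" if j: "j \<in> I - {i0}" for j
    proof -
      have fj: "finite (A j)" using wf j by auto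
      have m1: "min (card (e0 - A j)) (card (A j - e0)) = 1"
        using sp j i0 by (auto simp: e0_def)
      have "card (A j) \<ge> k" using i0 j by (auto simp: e0_def k_def)
      moreover have "card (A j) = card (A j \<inter> e0) + card (A j - e0)" using card_Int_Diff[OF fj] .
      moreover have "k = card (e0 \<inter> A j) + card (e0 - A j)" using card_Int_Diff[OF fe0] k_def by simp
      ultimately have "card (e0 - A j) \<le> card (A j - e0)" by (simp add: Int_commute)
      with m1 show ?thesis by simp
    qed
    have capk: "card (A j \<inter> e0) = k - 1" if j: "j \<in> I - {i0}" for j
      using card_Int_Diff[OF fe0, of "A j"] one[OF j] k_def by (simp add: Int_commute)
    define s where "s = (\<Sum>i\<in>I. c i)"
    define \<mu> where "\<mu> = - m * s"
    define c0 where "c0 = c i0"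
    have coord: "(\<Sum>j\<in>I. c j * char_vec (A j) u) = \<mu>" if "u \<in> e0" for u
      using eq e0V that by (auto simp: \<mu>_def s_def)
    have "(\<Sum>u\<in>e0. \<Sum>j\<in>I. c j * char_vec (A j) u) = real k * \<mu>"
      using coord by (simp add: k_def)
    moreover have "(\<Sum>u\<in>e0. \<Sum>j\<in>I. c j * char_vec (A j) u) = (\<Sum>j\<in>I. c j * real (card (e0 \<inter> A j)))"
      by (subst sum.swap) (simp add: sum_distrib_left[symmetric] sum_cv[OF fe0])
    moreover have "(\<Sum>j\<in>I. c j * real (card (e0 \<inter> A j))) = c0 * k + (\<Sum>j\<in>I-{i0}. c j * real (k - 1))"
      using sum.remove[OF fin i0(1), of "\<lambda>j. c j * real (card (e0 \<inter> A j))"] capk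
      by (simp add: c0_def k_def e0_def Int_commute)
    moreover have "(\<Sum>j\<in>I-{i0}. c j * real (k - 1)) = (s - c0) * real (k - 1)"
      using sum.remove[OF fin i0(1), of c] by (simp add: s_def c0_def sum_distrib_right)
    ultimately have c0eq: "c0 = real k * \<mu> - (real k - 1) * s"
      using k1 by (simp add: of_nat_diff algebra_simps)
    show ?thesis
    proof (cases "s = 0")
      case True
      have mu0: "\<mu> = 0" using True by (simp add: \<mu>_def)
      have c00: "c0 = 0" using c0eq True mu0 by simp
      have IH: "\<forall>i\<in>I-{i0}. c i = 0"
      proof (rule less.hyps[of "I - {i0}" A V 0 c])
        show "card (I - {i0}) < card I" by (rule card_Diff1_less[OF fin i0(1)])
        show "finite (I - {i0})" using fin by simp
        show "\<forall>i\<in>I - {i0}. finite (A i) \<and> A i \<noteq> {} \<and> A i \<subseteq> V" using wf by blast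
        show "\<forall>i\<in>I-{i0}. \<forall>j\<in>I-{i0}. i \<noteq> j \<longrightarrow> min (card (A i - A j)) (card (A j - A i)) = 1"
          using sp by blast
        show "(0::real) \<le> 0" by simp
        show "\<forall>x\<in>V. (\<Sum>i\<in>I-{i0}. c i * char_vec (A i) x) = - 0 * sum c (I - {i0})"
        proof
          fix x assume xV: "x \<in> V"
          have "(\<Sum>i\<in>I. c i * char_vec (A i) x) = c0 * char_vec e0 x + (\<Sum>i\<in>I-{i0}. c i * char_vec (A i) x)"
            using sum.remove[OF fin i0(1)] by (simp add: c0_def e0_def)
          moreover have "(\<Sum>i\<in>I. c i * char_vec (A i) x) = 0" using eq xV True by (simp add: s_def)
          ultimately show "(\<Sum>i\<in>I-{i0}. c i * char_vec (A i) x) = - 0 * sum c (I - {i0})" using c00 by simp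
        qed
      qed
      thus ?thesis using c00 c0_def by auto
    next
      case False
      have Ine: "I - {i0} \<noteq> {}"
      proof
        assume "I - {i0} = {}"
        hence "I = {i0}" using i0(1) by blast
        hence sc: "s = c0" by (simp add: s_def c0_def)
        have "real k * (1+m) * s = 0" using c0eq sc by (simp add: \<mu>_def algebra_simps)
        moreover have "real k * (1+m) \<noteq> 0" using k1 mpos by simp
        ultimately show False using False by simp
      qed
      obtain f1 where f1: "f1 \<in> I - {i0}" "\<forall>i\<in>I-{i0}. card (A f1 - e0) \<le> card (A i - e0)"
        using obtain_min[OF Ine, of "\<lambda>j. card (A j - e0)"] by blast
      obtain u where u: "e0 - A f1 = {u}" using one[OF f1(1)] by (rule card_1_singletonE)
      have ue0: "u \<in> e0" and uf1: "u \<notin> A f1" using u by auto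
      define B where "B = {j \<in> I - {i0}. u \<notin> A j}"
      define R where "R = I - {i0} - B"
      have f1B: "f1 \<in> B" using f1 uf1 by (simp add: B_def)
      have finB: "finite B" using fin by (simp add: B_def)
      have Bcap: "A j \<inter> e0 = e0 - {u}" if j: "j \<in> B" for j
      proof -
        have jI: "j \<in> I - {i0}" and uj: "u \<notin> A j" using j by (auto simp: B_def)
        have "\<forall>y\<in>e0 - A j. y = u" using card1_same[OF one[OF jI]] ue0 uj by blast
        thus ?thesis using ue0 uj by blast
      qed
      have Rw: "\<exists>w. e0 - A j = {w} \<and> w \<noteq> u \<and> u \<in> A j" if j: "j \<in> R" for j
      proof -
        have jI: "j \<in> I - {i0}" and uj: "u \<in> A j" using j by (auto simp: R_def B_def)
        obtain w where w: "e0 - A j = {w}" using one[OF jI] by (rule card_1_singletonE)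
        thus ?thesis using uj by auto
      qed
      have within: "\<not> (A p - e0 \<subseteq> A q - e0)" if "p \<in> B" "q \<in> B" "p \<noteq> q" for p q
      proof
        assume sub: "A p - e0 \<subseteq> A q - e0"
        have "A p - A q = {}" using sub Bcap[OF that(1)] Bcap[OF that(2)] by blast
        moreover have "min (card (A p - A q)) (card (A q - A p)) = 1"
          using sp that by (auto simp: B_def)
        ultimately show False by (metis card.empty min_0L zero_neq_one)
      qed
      have cross: "A p - e0 \<subseteq> A q - e0 \<or> A q - e0 \<subseteq> A p - e0" if p: "p \<in> B" and q: "q \<in> R" for p q
      proof (rule ccontr)
        assume "\<not> ?thesis"
        then obtain x y where x: "x \<in> A p - e0" "x \<notin> A q" and y: "y \<in> A q - e0" "y \<notin> A p" by blast
        obtain w where w: "e0 - A q = {w}" "w \<noteq> u" "u \<in> A q" using Rw[OF q] by blast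
        have wp: "w \<in> A p" using w Bcap[OF p] by blast
        have up: "u \<notin> A p" using p by (simp add: B_def)
        have wq: "w \<notin> A q" "w \<in> e0" using w by auto
        have "card (A p - A q) \<noteq> 1"
        proof
          assume "card (A p - A q) = 1"
          from card1_same[OF this, of w x] wp wq x show False by auto
        qed
        moreover have "card (A q - A p) \<noteq> 1"
        proof
          assume "card (A q - A p) = 1"
          from card1_same[OF this, of u y] up w y ue0 show False by auto
        qed
        moreover have "min (card (A p - A q)) (card (A q - A p)) = 1"
          using sp p q by (auto simp: B_def R_def)
        ultimately show False by (simp add: min_def split: if_splits)
      qed
      have crossing: "A b - e0 \<subseteq> A f" if b: "b \<in> B" and f: "f \<in> R" for b f
      proof -
        have fI: "f \<in> I - {i0}" using f by (simp add: R_def)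
        have ff: "finite (A f1 - e0)" using wf f1 by auto
        have c1: "A f1 - e0 \<subseteq> A f - e0"
        proof (cases "A f1 - e0 \<subseteq> A f - e0")
          case True thus ?thesis .
        next
          case False
          hence s1: "A f - e0 \<subseteq> A f1 - e0" using cross[OF f1B f] by blast
          have "card (A f1 - e0) \<le> card (A f - e0)" using f1(2) fI by blast
          hence "card (A f - e0) = card (A f1 - e0)" using card_mono[OF ff s1] by linarith
          hence "A f - e0 = A f1 - e0" by (rule card_subset_eq[OF ff s1])
          thus ?thesis by simp
        qed
        show ?thesis
        proof (cases "A b - e0 \<subseteq> A f - e0")
          case True thus ?thesis by blast
        next
          case False
          hence "A f - e0 \<subseteq> A b - e0" using cross[OF b f] by blast
          hence "A f1 - e0 \<subseteq> A b - e0" using c1 by blast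
          hence "b = f1" using within[OF f1B b] by blast
          thus ?thesis using c1 by blast
        qed
      qed
      have Idec: "I - {i0} = B \<union> R" and BRdisj: "B \<inter> R = {}" by (auto simp: R_def B_def)
      have finR: "finite R" using fin by (simp add: R_def)
      have split: "(\<Sum>j\<in>I. g j) = g i0 + (\<Sum>j\<in>B. g j) + (\<Sum>j\<in>R. g j)" for g :: "'i \<Rightarrow> real"
        using sum.remove[OF fin i0(1), of g] sum.union_disjoint[OF finB finR BRdisj, of g] Idec by simp
      have sumB: "(\<Sum>j\<in>B. c j) = s - \<mu>"
      proof -
        have "s = (\<Sum>j\<in>I. c j * char_vec (A j) u) + (\<Sum>j\<in>I. if u \<notin> A j then c j else 0)"
          unfolding s_def by (subst sum.distrib[symmetric]) (rule sum.cong, auto simp: char_vec_def)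
        moreover have "(\<Sum>j\<in>I. if u \<notin> A j then c j else 0) = (\<Sum>j\<in>{j\<in>I. u \<notin> A j}. c j)"
          using sum.inter_filter[OF fin, of c "\<lambda>j. u \<notin> A j"] by simp
        moreover have "{j\<in>I. u \<notin> A j} = B" using ue0 i0(1) by (auto simp: B_def e0_def)
        ultimately show ?thesis using coord[OF ue0] by simp
      qed
      have sumR: "(\<Sum>j\<in>R. c j) = s - c0 - (s - \<mu>)"
        using split[of c] sumB by (simp add: s_def c0_def)
      define U where "U = (\<Union>j\<in>B. A j - e0)"
      define m' where "m' = (real k * m + real k - 1) / (1 + m)"
      have m'pos: "m' \<ge> 0"
      proof -
        have "real k \<ge> 1" using k1 by simp
        moreover have "real k * m \<ge> 0" using mpos by simp
        ultimately have "real k * m + real k - 1 \<ge> 0" by linarith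
        moreover have "1 + m \<ge> 0" using mpos by linarith
        ultimately show ?thesis unfolding m'_def by (rule divide_nonneg_nonneg)
      qed
      have IH: "\<forall>j\<in>B. c j = 0"
      proof (rule less.hyps[of B "\<lambda>j. A j - e0" U m' c])
        have "card B \<le> card (I - {i0})" using fin by (intro card_mono) (auto simp: B_def)
        thus "card B < card I" using fin i0(1) card_Diff1_less[OF fin i0(1)] by simp
        show "finite B" by (rule finB)
        show "\<forall>i\<in>B. finite (A i - e0) \<and> A i - e0 \<noteq> {} \<and> A i - e0 \<subseteq> U"
        proof
          fix i assume i: "i \<in> B"
          have iI: "i \<in> I - {i0}" using i by (simp add: B_def)
          have fi: "finite (A i)" using wf iI by auto
          have "card (A i) \<ge> k" using i0 iI by (auto simp: e0_def k_def)
          moreover have "card (A i) = card (A i \<inter> e0) + card (A i - e0)" using card_Int_Diff[OF fi] .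
          ultimately have "card (A i - e0) \<ge> 1" using capk[OF iI] k1 by simp
          hence "A i - e0 \<noteq> {}" by (metis card.empty not_one_le_zero)
          thus "finite (A i - e0) \<and> A i - e0 \<noteq> {} \<and> A i - e0 \<subseteq> U" using fi i by (auto simp: U_def)
        qed
        show "\<forall>i\<in>B. \<forall>j\<in>B. i \<noteq> j \<longrightarrow> min (card ((A i - e0) - (A j - e0))) (card ((A j - e0) - (A i - e0))) = 1"
        proof (intro ballI impI)
          fix i j assume i: "i \<in> B" and j: "j \<in> B" and ij: "i \<noteq> j"
          have "A i - A j = (A i - e0) - (A j - e0)" "A j - A i = (A j - e0) - (A i - e0)"
            using Bcap[OF i] Bcap[OF j] by blast+
          moreover have "min (card (A i - A j)) (card (A j - A i)) = 1" using sp i j ij by (auto simp: B_def)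
          ultimately show "min (card ((A i - e0) - (A j - e0))) (card ((A j - e0) - (A i - e0))) = 1" by simp
        qed
        show "0 \<le> m'" by (rule m'pos)
        show "\<forall>x\<in>U. (\<Sum>i\<in>B. c i * char_vec (A i - e0) x) = - m' * sum c B"
        proof
          fix x assume xU: "x \<in> U"
          then obtain b where b: "b \<in> B" "x \<in> A b - e0" by (auto simp: U_def)
          have xV: "x \<in> V" using b wf by (auto simp: B_def)
          have xe0: "x \<notin> e0" using b by simp
          have "(\<Sum>j\<in>I. c j * char_vec (A j) x) = \<mu>" using eq xV by (simp add: \<mu>_def s_def)
          moreover have "(\<Sum>j\<in>I. c j * char_vec (A j) x) =
              c i0 * char_vec (A i0) x + (\<Sum>j\<in>B. c j * char_vec (A j) x) + (\<Sum>j\<in>R. c j * char_vec (A j) x)"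
            by (rule split)
          moreover have "char_vec (A i0) x = 0" using xe0 by (simp add: char_vec_def e0_def)
          moreover have "(\<Sum>j\<in>B. c j * char_vec (A j) x) = (\<Sum>j\<in>B. c j * char_vec (A j - e0) x)"
            using xe0 by (intro sum.cong) (auto simp: char_vec_def)
          moreover have "(\<Sum>j\<in>R. c j * char_vec (A j) x) = (\<Sum>j\<in>R. c j)"
            using crossing[OF b(1)] b(2) by (intro sum.cong) (auto simp: char_vec_def)
          ultimately have "(\<Sum>j\<in>B. c j * char_vec (A j - e0) x) = \<mu> - (s - c0 - (s - \<mu>))"
            using sumR by simp
          also have "\<dots> = c0" by simp
          also have "\<dots> = - m' * sum c B"
            unfolding sumB c0eq m'_def \<mu>_def using mpos by (simp add: field_simps)
          finally show "(\<Sum>i\<in>B. c i * char_vec (A i - e0) x) = - m' * sum c B" .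
        qed
      qed
      hence "s - \<mu> = 0" using sumB by simp
      hence "(1 + m) * s = 0" by (simp add: \<mu>_def algebra_simps)
      with mpos False show ?thesis by simp
    qed
  qed
qed

theorem proposition15:
  fixes V :: "'a set" and E :: "'a set set"
  assumes "hypergraph V E"
    and "one_sperner E"
    and "E \<noteq> {{}}"
  shows "lin_indep_family V E char_vec"
proof -
  have fV: "finite V" and sub: "\<forall>e\<in>E. e \<subseteq> V" using assms(1) by (auto simp: hypergraph_def)
  have fE: "finite E" using sub fV by (metis Pow_iff finite_Pow_iff finite_subset subsetI)
  have nemp: "{} \<notin> E"
  proof
    assume "{} \<in> E"
    with assms(3) obtain f where "f \<in> E" "f \<noteq> {}" by blast
    with \<open>{} \<in> E\<close> assms(2) have "min (card ({} - f)) (card (f - {})) = 1"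
      unfolding one_sperner_def by blast
    thus False by simp
  qed
  show ?thesis unfolding lin_indep_family_def
  proof (intro allI impI)
    fix c :: "'a set \<Rightarrow> real"
    assume h: "\<forall>v\<in>V. (\<Sum>i\<in>E. c i * char_vec i v) = 0"
    show "\<forall>i\<in>E. c i = 0"
    proof (rule key[of E id V 0 c])
      show "finite E" by (rule fE)
      show "\<forall>i\<in>E. finite (id i) \<and> id i \<noteq> {} \<and> id i \<subseteq> V"
        using sub nemp finite_subset[OF _ fV] by auto
      show "\<forall>i\<in>E. \<forall>j\<in>E. i \<noteq> j \<longrightarrow> min (card (id i - id j)) (card (id j - id i)) = 1"
        using assms(2) by (simp add: one_sperner_def)
      show "(0::real) \<le> 0" by simp
      show "\<forall>x\<in>V. (\<Sum>i\<in>E. c i * char_vec (id i) x) = - 0 * sum c E" using h by simp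
    qed
  qed
qed

end
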